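(* Let $\mathbf{T}\subset\mathbb{S}^3$ be a spherical tetrahedron with Gram matrix $G=\{g_{ij}\}_{i,j=0}^3$ and edge matrix $G^\star=\{g^\star_{ij}\}_{i,j=0}^3$, and let $c_{ij}$, $c^\star_{ij}$ be the $(i,j)$-cofactors of $G$ and $G^\star$ respectively. Then for all $i,j=0,1,2,3$: $$g_{ij}\,c^\star_{ij}\ge 0\qquad\text{and}\qquad g^\star_{ij}\,c_{ij}\ge 0.$$
   Context: A spherical tetrahedron $\mathbf{T}\subset\mathbb{S}^3\subset\mathbb{R}^4$ is the intersection of $\mathbb{S}^3$ with the cone $\{\sum\lambda_i\mathrm{p}_i:\lambda_i\ge0\}$ over four linearly independent unit vectors $\mathrm{p}_0,\dots,\mathrm{p}_3$. Its edge matrix is $G^\star=(\langle\mathrm{p}_i,\mathrm{p}_j\rangle)_{i,j=0}^3$, and its Gram matrix is $G=(\langle\mathrm{v}_i,\mathrm{v}_j\rangle)_{i,j=0}^3$, where $\mathrm{v}_i$ is the outer unit normal to the face opposite $\mathrm{p}_i$. The $(i,j)$-cofactor of a matrix is $(-1)^{i+j}$ times the determinant of the matrix with row $i$ and column $j$ deleted. *)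

theory Defs
  imports "HOL-Analysis.Analysis" "Jordan_Normal_Form.Determinant"
begin

text \<open>The 4x4 matrix of pairwise inner products (indices 0..3), as a JNF matrix, so that
  the JNF notion of (i,j)-cofactor ((-1)^(i+j) times the minor with row i and column j
  deleted) applies.\<close>

definition gram4 :: "(nat \<Rightarrow> real^4) \<Rightarrow> real mat" where
  "gram4 x = mat 4 4 (\<lambda>(i, j). x i \<bullet> x j)"

text \<open>v i is the outer unit normal to the face of the spherical tetrahedron spanned by
  p 0..p 3 opposite to p i: unit, orthogonal to all p j (j ~= i), pointing away from p i.\<close>

definition outer_unit_normals :: "(nat \<Rightarrow> real^4) \<Rightarrow> (nat \<Rightarrow> real^4) \<Rightarrow> bool" where
  "outer_unit_normals p v \<longleftrightarrow>
     (\<forall>i<4. norm (v i) = 1 \<and> v i \<bullet> p i < 0 \<and> (\<forall>j<4. j \<noteq> i \<longrightarrow> v i \<bullet> p j = 0))"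

end

theory Submission
  imports Defs
begin

definition diagm :: "(nat \<Rightarrow> real) \<Rightarrow> real mat" where
  "diagm d = mat 4 4 (\<lambda>(i,j). if i = j then d i else 0)"

lemma det_diagm: "det (diagm d) = d 0 * d 1 * d 2 * d 3"
proof -
  have "upper_triangular (diagm d)" unfolding upper_triangular_def diagm_def by auto
  then have "det (diagm d) = prod_list (diag_mat (diagm d))"
    by (rule det_upper_triangular[where n=4]) (simp add: diagm_def)
  also have "\<dots> = d 0 * d 1 * d 2 * d 3"
  proof -
    have u: "[0..<4] = [0,1,2,3::nat]" by (simp add: upt_rec)
    show ?thesis by (simp add: diag_mat_def diagm_def u)
  qed
  finally show ?thesis .
qed

lemma cofactor_sym:
  assumes X: "X \<in> carrier_mat n n" and s: "transpose_mat X = X"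
  shows "cofactor X j i = cofactor X i j"
proof -
  have sym: "X $$ (r,c) = X $$ (c,r)" if "r < n" "c < n" for r c
  proof -
    have "transpose_mat X $$ (c,r) = X $$ (r,c)" using X that by simp
    thus ?thesis using s by simp
  qed
  have "mat_delete X j i = transpose_mat (mat_delete X i j)"
  proof (rule eq_matI)
    fix a b assume ab: "a < dim_row (transpose_mat (mat_delete X i j))"
      "b < dim_col (transpose_mat (mat_delete X i j))"
    hence a: "a < n - 1" and b: "b < n - 1" using X by auto
    have r: "(if a < j then a else Suc a) < n" "(if b < i then b else Suc b) < n"
      using a b by auto
    show "mat_delete X j i $$ (a,b) = transpose_mat (mat_delete X i j) $$ (a,b)"
      using a b X sym[OF r] unfolding mat_delete_def by simp
  qed (use X in \<open>simp_all add: mat_delete_def\<close>)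
  hence "det (mat_delete X j i) = det (mat_delete X i j)"
    using det_transpose[OF mat_delete_carrier[OF X]] by simp
  thus ?thesis unfolding cofactor_def by (simp add: add.commute)
qed

lemma core:
  fixes X B :: "real mat"
  assumes X: "X \<in> carrier_mat 4 4" and B: "B \<in> carrier_mat 4 4"
    and s: "transpose_mat X = X" and dX: "det X \<ge> 0"
    and BX: "B * X = diagm d" and dneg: "\<forall>k<4. d k < 0"
    and ij: "i < 4" "j < 4"
  shows "(B * diagm d) $$ (i,j) * cofactor X i j \<ge> 0"
proof -
  have D: "diagm d \<in> carrier_mat 4 4" by (simp add: diagm_def)
  have "d 0 < 0" "d 1 < 0" "d 2 < 0" "d 3 < 0" using dneg by auto
  hence "det (diagm d) \<noteq> 0" by (simp add: det_diagm)
  hence "det X \<noteq> 0" using det_mult[OF B X] BX by auto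
  hence pos: "det X > 0" using dX by auto
  have "B * X * adj_mat X = B * (X * adj_mat X)"
    using assoc_mult_mat[OF B X adj_mat(1)[OF X]] .
  also have "\<dots> = det X \<cdot>\<^sub>m B" using adj_mat(2)[OF X] B by (simp add: mult_smult_distrib[OF B one_carrier_mat])
  finally have e: "det X \<cdot>\<^sub>m B = diagm d * adj_mat X" using BX by simp
  have "det X * B $$ (i,j) = (diagm d * adj_mat X) $$ (i,j)"
    using arg_cong[OF e, of "\<lambda>M. M $$ (i,j)"] B ij by simp
  also have "\<dots> = d i * cofactor X j i"
    using ij X unfolding diagm_def adj_mat_def
    apply (simp add: scalar_prod_def)
    apply (subst sum.remove[of _ i]) by auto
  finally have e2: "det X * B $$ (i,j) = d i * cofactor X j i" .
  have Y: "(B * diagm d) $$ (i,j) = B $$ (i,j) * d j"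
    using ij B unfolding diagm_def
    apply (simp add: scalar_prod_def)
    apply (subst sum.remove[of _ j]) by auto
  have "det X * ((B * diagm d) $$ (i,j) * cofactor X i j) = d i * d j * (cofactor X i j)^2"
    using e2 Y cofactor_sym[OF X s] by (simp add: power2_eq_square algebra_simps)
  also have "\<dots> \<ge> 0"
  proof -
    have "d i * d j > 0" using dneg ij by (simp add: mult_neg_neg)
    thus ?thesis by simp
  qed
  finally show ?thesis using pos by (simp add: zero_le_mult_iff)
qed

lemma sum4: "(\<Sum>k<4::nat. f k) = f 0 + f 1 + f 2 + f (3::nat)"
  by (simp add: eval_nat_numeral)

definition idx4 :: "nat \<Rightarrow> 4" where
  "idx4 k = (if k = 0 then 1 else if k = 1 then 2 else if k = 2 then 3 else 4)"

lemma mult4: "X \<in> carrier_mat 4 4 \<Longrightarrow> Y \<in> carrier_mat 4 4 \<Longrightarrow> i < 4 \<Longrightarrow> j < 4 \<Longrightarrow>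
   (X * Y) $$ (i,j) = (\<Sum>k<4. X $$ (i,k) * Y $$ (k,j))"
  by (simp add: scalar_prod_def lessThan_atLeast0)

lemma gram4_carrier: "gram4 q \<in> carrier_mat 4 4"
  by (simp add: gram4_def)

lemma gram4_sym: "transpose_mat (gram4 q) = gram4 q"
  by (rule eq_matI) (auto simp: gram4_def inner_commute)

lemma gram4_det: "det (gram4 q) \<ge> 0"
proof -
  define P where "P = mat 4 4 (\<lambda>(k,i). q i $ idx4 k)"
  have P: "P \<in> carrier_mat 4 4" by (simp add: P_def)
  have PT: "transpose_mat P \<in> carrier_mat 4 4" using P by simp
  have "gram4 q = transpose_mat P * P"
  proof (rule eq_matI)
    fix i j assume ij: "i < dim_row (transpose_mat P * P)" "j < dim_col (transpose_mat P * P)"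
    hence ij': "i < 4" "j < 4" using P by auto
    have "(transpose_mat P * P) $$ (i,j) = (\<Sum>k<4. P $$ (k,i) * P $$ (k,j))"
      using mult4[OF PT P ij'] P ij' by simp
    also have "\<dots> = q i \<bullet> q j"
      using ij' by (simp add: sum4 P_def inner_vec_def sum_4 idx4_def)
    finally show "gram4 q $$ (i,j) = (transpose_mat P * P) $$ (i,j)"
      using ij' by (simp add: gram4_def)
  qed (use P in \<open>auto simp: gram4_def\<close>)
  hence "det (gram4 q) = det P * det P"
    using det_mult[OF PT P] det_transpose[OF P] by simp
  thus ?thesis by simp
qed

lemma spans:
  fixes p :: "nat \<Rightarrow> real^4"
  assumes "inj_on p {0..<4}" "independent (p ` {0..<4})"
  shows "\<exists>u. y = (\<Sum>k<4. u k *\<^sub>R p k)"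
proof -
  have "card (p ` {0..<4}) = 4" using assms(1) by (simp add: card_image)
  hence "UNIV \<subseteq> span (p ` {0..<4})"
    using card_eq_dim[of "p ` {0..<4}" UNIV] assms(2) by simp
  then obtain u where "y = (\<Sum>x\<in>p ` {0..<4}. u x *\<^sub>R x)"
    using span_finite[of "p ` {0..<4}"] by auto
  also have "\<dots> = (\<Sum>k<4. u (p k) *\<^sub>R p k)"
    using sum.reindex[OF assms(1), of "\<lambda>x. u x *\<^sub>R x"] by (simp add: lessThan_atLeast0)
  finally show ?thesis by (intro exI[of _ "\<lambda>k. u (p k)"])
qed


lemma diagm_carrier: "diagm d \<in> carrier_mat 4 4" by (simp add: diagm_def)

lemma diagm_T: "transpose_mat (diagm d) = diagm d"
  by (rule eq_matI) (auto simp: diagm_def)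

lemma diagm_mult: "diagm e * diagm d = diagm (\<lambda>k. e k * d k)"
proof (rule eq_matI)
  fix i j assume "i < dim_row (diagm (\<lambda>k. e k * d k))" "j < dim_col (diagm (\<lambda>k. e k * d k))"
  hence ij: "i < 4" "j < 4" by (auto simp: diagm_def)
  show "(diagm e * diagm d) $$ (i,j) = diagm (\<lambda>k. e k * d k) $$ (i,j)"
    using ij apply (simp add: mult4[OF diagm_carrier diagm_carrier ij])
    apply (simp add: diagm_def)
    apply (subst sum.remove[of _ i]) apply (auto intro!: sum.neutral)
    done
qed (auto simp: diagm_def)

theorem proposition3:
  fixes p v :: "nat \<Rightarrow> real^4" and i j :: nat
  assumes unit: "\<forall>k<4. norm (p k) = 1"
    and indep: "inj_on p {0..<4}" "independent (p ` {0..<4})"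
    and normals: "outer_unit_normals p v"
    and ij: "i < 4" "j < 4"
  shows "(gram4 v) $$ (i, j) * Determinant.cofactor (gram4 p) i j \<ge> 0
       \<and> (gram4 p) $$ (i, j) * Determinant.cofactor (gram4 v) i j \<ge> 0"
proof -
  have "\<forall>i. \<exists>u. v i = (\<Sum>k<4. u k *\<^sub>R p k)" using spans[OF indep] by blast
  then obtain a where a: "\<And>i. v i = (\<Sum>k<4. a i k *\<^sub>R p k)" by metis
  define d where "d i = v i \<bullet> p i" for i
  have dneg: "\<forall>k<4. d k < 0" using normals by (simp add: outer_unit_normals_def d_def)
  have orth: "v i' \<bullet> p j' = (if i' = j' then d i' else 0)" if "i' < 4" "j' < 4" for i' j'
    using normals that by (auto simp: outer_unit_normals_def d_def)
  define A where "A = mat 4 4 (\<lambda>(i,k). a i k)"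
  have A: "A \<in> carrier_mat 4 4" by (simp add: A_def)
  define M where "M = gram4 p"
  define Gv where "Gv = gram4 v"
  have M: "M \<in> carrier_mat 4 4" and Gv: "Gv \<in> carrier_mat 4 4"
    by (simp_all add: M_def Gv_def gram4_carrier)
  have AM: "A * M = diagm d"
  proof (rule eq_matI)
    fix i j assume "i < dim_row (diagm d)" "j < dim_col (diagm d)"
    hence ij: "i < 4" "j < 4" by (auto simp: diagm_def)
    have "(A * M) $$ (i,j) = (\<Sum>k<4. a i k * (p k \<bullet> p j))"
      using mult4[OF A M ij] ij by (simp add: A_def M_def gram4_def)
    also have "\<dots> = v i \<bullet> p j" by (simp add: a inner_sum_left)
    also have "\<dots> = diagm d $$ (i,j)" using orth[OF ij] ij by (simp add: diagm_def)
    finally show "(A * M) $$ (i,j) = diagm d $$ (i,j)" .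
  qed (use A M in \<open>auto simp: diagm_def\<close>)
  have AD: "A * diagm d = Gv"
  proof (rule eq_matI)
    fix i j assume "i < dim_row Gv" "j < dim_col Gv"
    hence ij: "i < 4" "j < 4" using Gv by auto
    have "(A * diagm d) $$ (i,j) = (\<Sum>k<4. a i k * diagm d $$ (k,j))"
      using mult4[OF A diagm_carrier ij] ij by (simp add: A_def)
    also have "\<dots> = (\<Sum>k<4. a i k * (p k \<bullet> v j))"
    proof (rule sum.cong)
      fix k assume "k \<in> {..<4::nat}"
      hence k: "k < 4" by simp
      have "p k \<bullet> v j = v j \<bullet> p k" by (rule inner_commute)
      thus "a i k * diagm d $$ (k,j) = a i k * (p k \<bullet> v j)"
        using orth[OF ij(2) k] k ij by (auto simp: diagm_def)
    qed simp
    also have "\<dots> = v i \<bullet> v j" by (simp add: a[of i] inner_sum_left)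
    finally show "(A * diagm d) $$ (i,j) = Gv $$ (i,j)" using ij by (simp add: Gv_def gram4_def)
  qed (use Gv A in \<open>auto simp: diagm_def\<close>)
  have part1: "Gv $$ (i, j) * cofactor M i j \<ge> 0"
    using core[OF M A _ _ AM dneg ij] AD gram4_sym gram4_det by (simp add: M_def)
  define E where "E = diagm (\<lambda>k. 1 / d k)"
  have E: "E \<in> carrier_mat 4 4" by (simp add: E_def diagm_carrier)
  have ED: "E * diagm d = 1\<^sub>m 4"
    unfolding E_def diagm_mult
  proof (rule eq_matI)
    fix i j assume "i < dim_row (1\<^sub>m 4 :: real mat)" "j < dim_col (1\<^sub>m 4 :: real mat)"
    hence ij: "i < 4" "j < 4" by auto
    show "diagm (\<lambda>k. 1 / d k * d k) $$ (i,j) = 1\<^sub>m 4 $$ (i,j)"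
      using ij dneg by (auto simp: diagm_def)
  qed (auto simp: diagm_def)
  define B where "B = M * E"
  have B: "B \<in> carrier_mat 4 4" using M E by (simp add: B_def)
  have GvT: "Gv = diagm d * transpose_mat A"
  proof -
    have "Gv = transpose_mat Gv" using gram4_sym by (simp add: Gv_def)
    also have "\<dots> = diagm d * transpose_mat A"
      unfolding AD[symmetric] transpose_mult[OF A diagm_carrier] diagm_T ..
    finally show ?thesis .
  qed
  have MAT: "M * transpose_mat A = diagm d"
  proof -
    have "transpose_mat (A * M) = transpose_mat M * transpose_mat A"
      by (rule transpose_mult[OF A M])
    thus ?thesis using AM gram4_sym diagm_T by (simp add: M_def)
  qed
  have AT: "transpose_mat A \<in> carrier_mat 4 4" using A by simp
  have BGv: "B * Gv = diagm d"
  proof -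
    have "B * Gv = M * (E * (diagm d * transpose_mat A))"
      unfolding B_def GvT
      by (rule assoc_mult_mat[OF M E mult_carrier_mat[OF diagm_carrier AT]])
    also have "E * (diagm d * transpose_mat A) = E * diagm d * transpose_mat A"
      by (rule assoc_mult_mat[OF E diagm_carrier AT, symmetric])
    also have "\<dots> = transpose_mat A" using ED AT by simp
    finally show ?thesis using MAT by simp
  qed
  have BD: "B * diagm d = M"
  proof -
    have "B * diagm d = M * (E * diagm d)" unfolding B_def
      by (rule assoc_mult_mat[OF M E diagm_carrier])
    thus ?thesis using ED M by simp
  qed
  have part2: "M $$ (i, j) * cofactor Gv i j \<ge> 0"
    using core[OF Gv B _ _ BGv dneg ij] BD gram4_sym gram4_det by (simp add: Gv_def)
  show ?thesis using part1 part2 by (simp add: M_def Gv_def)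
qed

end
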